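(* Let $\mathcal N_{Y_1\cdots Y_K\mid X}$ and $\widetilde{\mathcal N}_{Y_1\cdots Y_K\mid X}$ be two discrete memoryless $K$-user broadcast channels with the same input alphabet and output alphabets, whose marginals coincide: $\mathcal N_{Y_k\mid X}=\widetilde{\mathcal N}_{Y_k\mid X}$ for all $k\in[K]$, where $\mathcal N_{Y_k\mid X}(y_k\mid x)=\sum_{(y_l)_{l\ne k}}\mathcal N(y_1,\dots,y_K\mid x)$. Then for any NS-assisted (or classical) coding scheme over $n$ channel uses, the error probability of the $k$-th message is the same when the scheme is used over $\mathcal N$ as when it is used over $\widetilde{\mathcal N}$, i.e. $P_{e,k}=\widetilde P_{e,k}$ for every $k\in[K]$.
   Context: A discrete memoryless $K$-user BC has input alphabet $\mathcal X$, output alphabets $\mathcal Y_k$ and transition law $\mathcal N(y_1,\dots,y_K\mid x)$, with $n$ uses given by $\mathcal N^{\otimes n}(y^{[n]}_{[K]}\mid x^{[n]})=\prod_{\tau=1}^n\mathcal N(y_1^{(\tau)},\dots,y_K^{(\tau)}\mid x^{(\tau)})$. Messages $W_1,\dots,W_K$ are independent, $W_k$ uniform on a finite nonempty set $\mathcal M_k$. A classical scheme: stochastic encoder $X^{[n]}=\phi(W_1,\dots,W_K)$ and stochastic decoders $\hat W_k=\psi_k(Y_k^{[n]})$. A $\kappa$-partite NS box is a conditional pmf $\mathcal Z(b_1,\dots,b_\kappa\mid a_1,\dots,a_\kappa)$ (finite output alphabets) such that for every subset of parties, the marginal of their outputs given all inputs depends only on their inputs. An NS-assisted scheme: a $(K+1)$-partite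 NS box where the transmitter inputs $(W_1,\dots,W_K)$ and obtains $U\in\mathcal X^n$, transmitting $X^{[n]}=U$; Rx-$k$ inputs $Y_k^{[n]}$ and obtains $\hat W_k\in\mathcal M_k$; joint law $\Pr(w,x^{[n]},y^{[n]}_{[K]},\hat w)=\frac{1}{\prod_k|\mathcal M_k|}\mathcal Z(x^{[n]},\hat w_{[K]}\mid w_{[K]},y^{[n]}_{[K]})\mathcal N^{\otimes n}(y^{[n]}_{[K]}\mid x^{[n]})$. The error probability of message $k$ is $P_{e,k}=\Pr(\hat W_k\ne W_k)$ ($\widetilde P_{e,k}$ over $\widetilde{\mathcal N}$). *)

theory Defs
  imports Complex_Main "HOL-Library.FuncSet"
begin

text \<open>Conventions: users are indexed by 1..K, channel uses (time) by 1..n.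
  A broadcast channel N maps an input x and an output tuple y (a function on {1..K},
  y k being the output of user k) to a probability.  The party 0 of the NS box is the
  transmitter, party k (1..K) is receiver k.\<close>

definition seqs :: "nat \<Rightarrow> 'a set \<Rightarrow> (nat \<Rightarrow> 'a) set" where
  "seqs n A = PiE {1..n} (\<lambda>_. A)"

definition is_BC :: "'x set \<Rightarrow> nat \<Rightarrow> (nat \<Rightarrow> 'y set) \<Rightarrow> ('x \<Rightarrow> (nat \<Rightarrow> 'y) \<Rightarrow> real) \<Rightarrow> bool" where
  "is_BC X K Y N \<longleftrightarrow> finite X \<and> (\<forall>k\<in>{1..K}. finite (Y k)) \<and>
     (\<forall>x\<in>X. (\<forall>y\<in>PiE {1..K} Y. N x y \<ge> 0) \<and> (\<Sum>y\<in>PiE {1..K} Y. N x y) = 1)"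

definition BC_marginal :: "nat \<Rightarrow> (nat \<Rightarrow> 'y set) \<Rightarrow> ('x \<Rightarrow> (nat \<Rightarrow> 'y) \<Rightarrow> real) \<Rightarrow> nat \<Rightarrow> 'x \<Rightarrow> 'y \<Rightarrow> real" where
  "BC_marginal K Y N k x yk = (\<Sum>y\<in>{y\<in>PiE {1..K} Y. y k = yk}. N x y)"

definition BC_n :: "nat \<Rightarrow> nat \<Rightarrow> ('x \<Rightarrow> (nat \<Rightarrow> 'y) \<Rightarrow> real) \<Rightarrow> (nat \<Rightarrow> 'x) \<Rightarrow> (nat \<Rightarrow> nat \<Rightarrow> 'y) \<Rightarrow> real" where
  "BC_n K n N xs ys = (\<Prod>\<tau>\<in>{1..n}. N (xs \<tau>) (\<lambda>k\<in>{1..K}. ys k \<tau>))"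

definition out_seqs :: "nat \<Rightarrow> nat \<Rightarrow> (nat \<Rightarrow> 'y set) \<Rightarrow> (nat \<Rightarrow> nat \<Rightarrow> 'y) set" where
  "out_seqs K n Y = PiE {1..K} (\<lambda>k. seqs n (Y k))"

text \<open>NS box Z u wh w ys: transmitter input w (message tuple), output u \<in> X^n;
  receiver k input ys k \<in> Y_k^n, output wh k \<in> M_k.\<close>
definition ns_in :: "nat \<Rightarrow> nat \<Rightarrow> (nat \<Rightarrow> 'm set) \<Rightarrow> (nat \<Rightarrow> 'y set) \<Rightarrow> ((nat \<Rightarrow> 'm) \<times> (nat \<Rightarrow> nat \<Rightarrow> 'y)) set" where
  "ns_in K n M Y = PiE {1..K} M \<times> out_seqs K n Y"

definition ns_out :: "'x set \<Rightarrow> nat \<Rightarrow> nat \<Rightarrow> (nat \<Rightarrow> 'm set) \<Rightarrow> ((nat \<Rightarrow> 'x) \<times> (nat \<Rightarrow> 'm)) set" where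
  "ns_out X K n M = seqs n X \<times> PiE {1..K} M"

definition ns_marg :: "'x set \<Rightarrow> nat \<Rightarrow> nat \<Rightarrow> (nat \<Rightarrow> 'm set)
    \<Rightarrow> ((nat \<Rightarrow> 'x) \<Rightarrow> (nat \<Rightarrow> 'm) \<Rightarrow> (nat \<Rightarrow> 'm) \<Rightarrow> (nat \<Rightarrow> nat \<Rightarrow> 'y) \<Rightarrow> real)
    \<Rightarrow> nat set \<Rightarrow> (nat \<Rightarrow> 'm) \<Rightarrow> (nat \<Rightarrow> nat \<Rightarrow> 'y) \<Rightarrow> (nat \<Rightarrow> 'x) \<Rightarrow> (nat \<Rightarrow> 'm) \<Rightarrow> real" where
  "ns_marg X K n M Z S w ys u wh =
     (\<Sum>(u', wh')\<in>{(u', wh')\<in>ns_out X K n M. (0 \<in> S \<longrightarrow> u' = u) \<and> (\<forall>k\<in>S - {0}. wh' k = wh k)}.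
        Z u' wh' w ys)"

definition is_NS_scheme :: "'x set \<Rightarrow> nat \<Rightarrow> nat \<Rightarrow> (nat \<Rightarrow> 'm set) \<Rightarrow> (nat \<Rightarrow> 'y set)
    \<Rightarrow> ((nat \<Rightarrow> 'x) \<Rightarrow> (nat \<Rightarrow> 'm) \<Rightarrow> (nat \<Rightarrow> 'm) \<Rightarrow> (nat \<Rightarrow> nat \<Rightarrow> 'y) \<Rightarrow> real) \<Rightarrow> bool" where
  "is_NS_scheme X K n M Y Z \<longleftrightarrow>
     (\<forall>(w, ys)\<in>ns_in K n M Y.
        (\<forall>(u, wh)\<in>ns_out X K n M. Z u wh w ys \<ge> 0) \<and>
        (\<Sum>(u, wh)\<in>ns_out X K n M. Z u wh w ys) = 1) \<and>
     (\<forall>S. S \<subseteq> {0..K} \<longrightarrow>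
        (\<forall>(w, ys)\<in>ns_in K n M Y. \<forall>(w', ys')\<in>ns_in K n M Y.
           ((0 \<in> S \<longrightarrow> w = w') \<and> (\<forall>k\<in>S - {0}. ys k = ys' k)) \<longrightarrow>
           (\<forall>(u, wh)\<in>ns_out X K n M.
              ns_marg X K n M Z S w ys u wh = ns_marg X K n M Z S w' ys' u wh)))"

definition Pe_NS :: "'x set \<Rightarrow> nat \<Rightarrow> nat \<Rightarrow> (nat \<Rightarrow> 'm set) \<Rightarrow> (nat \<Rightarrow> 'y set)
    \<Rightarrow> ('x \<Rightarrow> (nat \<Rightarrow> 'y) \<Rightarrow> real)
    \<Rightarrow> ((nat \<Rightarrow> 'x) \<Rightarrow> (nat \<Rightarrow> 'm) \<Rightarrow> (nat \<Rightarrow> 'm) \<Rightarrow> (nat \<Rightarrow> nat \<Rightarrow> 'y) \<Rightarrow> real) \<Rightarrow> nat \<Rightarrow> real" where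
  "Pe_NS X K n M Y N Z k =
     (1 / (\<Prod>j\<in>{1..K}. real (card (M j)))) *
     (\<Sum>w\<in>PiE {1..K} M. \<Sum>u\<in>seqs n X. \<Sum>ys\<in>out_seqs K n Y.
        \<Sum>wh\<in>{wh\<in>PiE {1..K} M. wh k \<noteq> w k}. Z u wh w ys * BC_n K n N u ys)"

definition is_classical_scheme :: "'x set \<Rightarrow> nat \<Rightarrow> nat \<Rightarrow> (nat \<Rightarrow> 'm set) \<Rightarrow> (nat \<Rightarrow> 'y set)
    \<Rightarrow> ((nat \<Rightarrow> 'm) \<Rightarrow> (nat \<Rightarrow> 'x) \<Rightarrow> real) \<Rightarrow> (nat \<Rightarrow> (nat \<Rightarrow> 'y) \<Rightarrow> 'm \<Rightarrow> real) \<Rightarrow> bool" where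
  "is_classical_scheme X K n M Y phi psi \<longleftrightarrow>
     (\<forall>w\<in>PiE {1..K} M. (\<forall>u\<in>seqs n X. phi w u \<ge> 0) \<and> (\<Sum>u\<in>seqs n X. phi w u) = 1) \<and>
     (\<forall>k\<in>{1..K}. \<forall>yk\<in>seqs n (Y k). (\<forall>m\<in>M k. psi k yk m \<ge> 0) \<and> (\<Sum>m\<in>M k. psi k yk m) = 1)"

definition Pe_classical :: "'x set \<Rightarrow> nat \<Rightarrow> nat \<Rightarrow> (nat \<Rightarrow> 'm set) \<Rightarrow> (nat \<Rightarrow> 'y set)
    \<Rightarrow> ('x \<Rightarrow> (nat \<Rightarrow> 'y) \<Rightarrow> real)
    \<Rightarrow> ((nat \<Rightarrow> 'm) \<Rightarrow> (nat \<Rightarrow> 'x) \<Rightarrow> real) \<Rightarrow> (nat \<Rightarrow> (nat \<Rightarrow> 'y) \<Rightarrow> 'm \<Rightarrow> real) \<Rightarrow> nat \<Rightarrow> real" where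
  "Pe_classical X K n M Y N phi psi k =
     (1 / (\<Prod>j\<in>{1..K}. real (card (M j)))) *
     (\<Sum>w\<in>PiE {1..K} M. \<Sum>u\<in>seqs n X. \<Sum>ys\<in>out_seqs K n Y.
        phi w u * BC_n K n N u ys * (\<Sum>m\<in>M k - {w k}. psi k (ys k) m))"

end

theory Submission
  imports Defs
begin

lemma fiber_sum:
  assumes fin: "\<forall>j\<in>{1..K}. finite (Y j)" and k: "k \<in> {1..K}" and yk: "yk \<in> seqs n (Y k)"
  shows "(\<Sum>ys\<in>{ys\<in>out_seqs K n Y. ys k = yk}. BC_n K n N u ys)
       = (\<Prod>\<tau>\<in>{1..n}. BC_marginal K Y N k (u \<tau>) (yk \<tau>))"
proof -
  let ?A = "\<lambda>\<tau>. {y\<in>PiE {1..K} Y. y k = yk \<tau>}"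
  have "(\<Prod>\<tau>\<in>{1..n}. BC_marginal K Y N k (u \<tau>) (yk \<tau>))
      = (\<Prod>\<tau>\<in>{1..n}. \<Sum>y\<in>?A \<tau>. N (u \<tau>) y)"
    unfolding BC_marginal_def by simp
  also have "\<dots> = (\<Sum>z\<in>PiE {1..n} ?A. \<Prod>\<tau>\<in>{1..n}. N (u \<tau>) (z \<tau>))"
  proof (rule prod_sum_PiE)
    have finPi: "finite (PiE {1..K} Y)" by (rule finite_PiE) (use fin in auto)
    show "finite (?A \<tau>)" for \<tau> by (rule finite_subset[OF _ finPi]) auto
  qed simp
  also have "\<dots> = (\<Sum>ys\<in>{ys\<in>out_seqs K n Y. ys k = yk}. BC_n K n N u ys)"
    unfolding BC_n_def
  proof (rule sum.reindex_bij_witness[where i="\<lambda>ys. \<lambda>\<tau>\<in>{1..n}. \<lambda>j\<in>{1..K}. ys j \<tau>"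
        and j="\<lambda>z. \<lambda>j\<in>{1..K}. \<lambda>\<tau>\<in>{1..n}. z \<tau> j"])
    fix z assume "z \<in> PiE {1..n} ?A"
    then show "(\<lambda>\<tau>\<in>{1..n}. \<lambda>j\<in>{1..K}. (\<lambda>j\<in>{1..K}. \<lambda>\<tau>\<in>{1..n}. z \<tau> j) j \<tau>) = z"
      by (auto simp: PiE_iff extensional_def fun_eq_iff)
  next
    fix z assume "z \<in> PiE {1..n} ?A"
    then show "(\<lambda>j\<in>{1..K}. \<lambda>\<tau>\<in>{1..n}. z \<tau> j) \<in> {ys\<in>out_seqs K n Y. ys k = yk}"
      using k yk by (auto simp: out_seqs_def seqs_def PiE_iff extensional_def fun_eq_iff)
  next
    fix ys assume "ys \<in> {ys\<in>out_seqs K n Y. ys k = yk}"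
    then show "(\<lambda>j\<in>{1..K}. \<lambda>\<tau>\<in>{1..n}. (\<lambda>\<tau>\<in>{1..n}. \<lambda>j\<in>{1..K}. ys j \<tau>) \<tau> j) = ys"
      by (auto simp: out_seqs_def seqs_def PiE_iff extensional_def fun_eq_iff)
  next
    fix ys assume "ys \<in> {ys\<in>out_seqs K n Y. ys k = yk}"
    then show "(\<lambda>\<tau>\<in>{1..n}. \<lambda>j\<in>{1..K}. ys j \<tau>) \<in> PiE {1..n} ?A"
      using k by (auto simp: out_seqs_def seqs_def PiE_iff)
  next
    fix z assume "z \<in> PiE {1..n} ?A"
    then show "(\<Prod>\<tau>\<in>{1..n}. N (u \<tau>) (\<lambda>j\<in>{1..K}. (\<lambda>j\<in>{1..K}. \<lambda>\<tau>\<in>{1..n}. z \<tau> j) j \<tau>)) =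
       (\<Prod>\<tau>\<in>{1..n}. N (u \<tau>) (z \<tau>))"
      by (intro prod.cong refl arg_cong[where f="N _"]) (auto simp: PiE_iff extensional_def fun_eq_iff)
  qed
  finally show ?thesis by simp
qed

lemma fin_out: assumes fin: "\<forall>j\<in>{1..K}. finite (Y j)" shows "finite (out_seqs K n Y)"
  unfolding out_seqs_def seqs_def using fin by (auto intro!: finite_PiE)

lemma marg_sum:
  assumes fin: "\<forall>j\<in>{1..K}. finite (Y j)" and k: "k \<in> {1..K}"
  shows "(\<Sum>ys\<in>out_seqs K n Y. g (ys k) * BC_n K n N u ys)
       = (\<Sum>yk\<in>seqs n (Y k). g yk * (\<Prod>\<tau>\<in>{1..n}. BC_marginal K Y N k (u \<tau>) (yk \<tau>)))"
proof -
  have fs: "finite (seqs n (Y k))" unfolding seqs_def using fin k by (auto intro!: finite_PiE)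
  have "(\<Sum>ys\<in>out_seqs K n Y. g (ys k) * BC_n K n N u ys)
     = (\<Sum>yk\<in>seqs n (Y k). \<Sum>ys\<in>{ys\<in>out_seqs K n Y. ys k = yk}. g (ys k) * BC_n K n N u ys)"
    by (rule sum.group[symmetric]) (use fin_out[OF fin] fs k in \<open>auto simp: out_seqs_def\<close>)
  also have "\<dots> = (\<Sum>yk\<in>seqs n (Y k). g yk * (\<Sum>ys\<in>{ys\<in>out_seqs K n Y. ys k = yk}. BC_n K n N u ys))"
    by (auto simp: sum_distrib_left intro!: sum.cong)
  also have "\<dots> = (\<Sum>yk\<in>seqs n (Y k). g yk * (\<Prod>\<tau>\<in>{1..n}. BC_marginal K Y N k (u \<tau>) (yk \<tau>)))"
    by (intro sum.cong refl, subst fiber_sum[OF fin k]) auto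
  finally show ?thesis .
qed

lemma marg_eq:
  assumes fin: "\<forall>j\<in>{1..K}. finite (Y j)" and k: "k \<in> {1..K}" and u: "u \<in> seqs n X"
    and m: "\<forall>k\<in>{1..K}. \<forall>x\<in>X. \<forall>yk\<in>Y k. BC_marginal K Y N k x yk = BC_marginal K Y Nt k x yk"
  shows "(\<Sum>ys\<in>out_seqs K n Y. g (ys k) * BC_n K n N u ys)
       = (\<Sum>ys\<in>out_seqs K n Y. g (ys k) * BC_n K n Nt u ys)"
  unfolding marg_sum[OF fin k]
proof (intro sum.cong refl arg_cong2[where f="(*)"] prod.cong)
  fix yk \<tau> assume "yk \<in> seqs n (Y k)" "\<tau> \<in> {1..n}"
  then show "BC_marginal K Y N k (u \<tau>) (yk \<tau>) = BC_marginal K Y Nt k (u \<tau>) (yk \<tau>)"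
    using m k u by (auto simp: seqs_def PiE_iff)
qed

lemma ns_marg_fiber:
  assumes k: "k \<in> {1..K}" and u: "u \<in> seqs n X" and wh0: "wh0 \<in> PiE {1..K} M"
  shows "ns_marg X K n M Z {0,k} w ys u wh0 = (\<Sum>wh\<in>{wh\<in>PiE {1..K} M. wh k = wh0 k}. Z u wh w ys)"
proof -
  have k0: "k \<noteq> 0" using k by auto
  have "{(u', wh'). (u', wh') \<in> ns_out X K n M \<and> (0 \<in> {0,k} \<longrightarrow> u' = u) \<and> (\<forall>j\<in>{0,k} - {0}. wh' j = wh0 j)}
      = (\<lambda>wh. (u, wh)) ` {wh\<in>PiE {1..K} M. wh k = wh0 k}"
    using k0 u by (auto simp: ns_out_def)
  then have "ns_marg X K n M Z {0,k} w ys u wh0 = (\<Sum>(u', wh')\<in>(\<lambda>wh. (u, wh)) ` {wh\<in>PiE {1..K} M. wh k = wh0 k}. Z u' wh' w ys)"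
    unfolding ns_marg_def by simp
  also have "\<dots> = (\<Sum>wh\<in>{wh\<in>PiE {1..K} M. wh k = wh0 k}. Z u wh w ys)"
    by (subst sum.reindex) (auto simp: inj_on_def)
  finally show ?thesis .
qed

lemma ns_inv:
  assumes ns: "is_NS_scheme X K n M Y Z" and Mne: "\<forall>k\<in>{1..K}. finite (M k) \<and> M k \<noteq> {}"
    and k: "k \<in> {1..K}" and w: "w \<in> PiE {1..K} M" and u: "u \<in> seqs n X"
    and ys: "ys \<in> out_seqs K n Y" and ys': "ys' \<in> out_seqs K n Y" and eq: "ys k = ys' k"
  shows "(\<Sum>wh\<in>{wh\<in>PiE {1..K} M. wh k \<noteq> w k}. Z u wh w ys)
       = (\<Sum>wh\<in>{wh\<in>PiE {1..K} M. wh k \<noteq> w k}. Z u wh w ys')"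
proof -
  define whm where "whm m = (\<lambda>j\<in>{1..K}. if j = k then m else SOME x. x \<in> M j)" for m
  have whm: "whm m \<in> PiE {1..K} M" "whm m k = m" if "m \<in> M k" for m
  proof -
    have "(SOME x. x \<in> M j) \<in> M j" if "j \<in> {1..K}" for j
    proof -
      have "M j \<noteq> {}" using Mne that by blast
      then show ?thesis by (simp add: some_in_eq)
    qed
    then show "whm m \<in> PiE {1..K} M" "whm m k = m" using that k unfolding whm_def by (auto simp: PiE_iff)
  qed
  have finPi: "finite (PiE {1..K} M)" using Mne by (auto intro!: finite_PiE)
  have grp: "(\<Sum>wh\<in>{wh\<in>PiE {1..K} M. wh k \<noteq> w k}. Z u wh w v)
     = (\<Sum>m\<in>M k - {w k}. ns_marg X K n M Z {0,k} w v u (whm m))" for v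
  proof -
    have "(\<Sum>wh\<in>{wh\<in>PiE {1..K} M. wh k \<noteq> w k}. Z u wh w v)
       = (\<Sum>m\<in>M k - {w k}. \<Sum>wh\<in>{wh\<in>{wh\<in>PiE {1..K} M. wh k \<noteq> w k}. wh k = m}. Z u wh w v)"
      by (rule sum.group[symmetric], rule finite_subset[OF _ finPi]) (use finPi Mne k in \<open>auto\<close>)
    also have "\<dots> = (\<Sum>m\<in>M k - {w k}. ns_marg X K n M Z {0,k} w v u (whm m))"
    proof (intro sum.cong refl)
      fix m assume m: "m \<in> M k - {w k}"
      have "{wh\<in>{wh\<in>PiE {1..K} M. wh k \<noteq> w k}. wh k = m} = {wh\<in>PiE {1..K} M. wh k = whm m k}"
        using m whm[of m] by auto
      show "(\<Sum>wh\<in>{wh\<in>{wh\<in>PiE {1..K} M. wh k \<noteq> w k}. wh k = m}. Z u wh w v)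
          = ns_marg X K n M Z {0,k} w v u (whm m)"
      proof -
        have mk: "m \<in> M k" using m by simp
        show ?thesis unfolding ns_marg_fiber[OF k u whm(1)[OF mk]] \<open>{wh\<in>{wh\<in>PiE {1..K} M. wh k \<noteq> w k}. wh k = m} = _\<close> ..
      qed
    qed
    finally show ?thesis .
  qed
  have S: "{0,k} \<subseteq> {0..K}" using k by auto
  have "ns_marg X K n M Z {0,k} w ys u (whm m) = ns_marg X K n M Z {0,k} w ys' u (whm m)"
    if m: "m \<in> M k" for m
  proof -
    have i1: "(w, ys) \<in> ns_in K n M Y" and i2: "(w, ys') \<in> ns_in K n M Y"
      using w ys ys' by (auto simp: ns_in_def)
    have o1: "(u, whm m) \<in> ns_out X K n M" using u whm[OF m] by (auto simp: ns_out_def)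
    note H = mp[OF spec[OF conjunct2[OF ns[unfolded is_NS_scheme_def]], of "{0,k}"] S]
    have H1: "\<forall>(w', ys')\<in>ns_in K n M Y.
           ((0 \<in> {0,k} \<longrightarrow> w = w') \<and> (\<forall>j\<in>{0,k} - {0}. ys j = ys' j)) \<longrightarrow>
           (\<forall>(u, wh)\<in>ns_out X K n M.
              ns_marg X K n M Z {0,k} w ys u wh = ns_marg X K n M Z {0,k} w' ys' u wh)"
      using bspec[OF H i1] by simp
    have H2: "((0 \<in> {0,k} \<longrightarrow> w = w) \<and> (\<forall>j\<in>{0,k} - {0}. ys j = ys' j)) \<longrightarrow>
           (\<forall>(u, wh)\<in>ns_out X K n M.
              ns_marg X K n M Z {0,k} w ys u wh = ns_marg X K n M Z {0,k} w ys' u wh)"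
      using bspec[OF H1 i2] by simp
    have c: "(0 \<in> {0,k} \<longrightarrow> w = w) \<and> (\<forall>j\<in>{0,k} - {0}. ys j = ys' j)" using eq by simp
    show ?thesis using bspec[OF mp[OF H2 c] o1] by simp
  qed
  then show ?thesis unfolding grp by (intro sum.cong) auto
qed

theorem theorem2:
  fixes X :: "'x set" and K n :: nat and Y :: "nat \<Rightarrow> 'y set" and M :: "nat \<Rightarrow> 'm set"
    and N Nt :: "'x \<Rightarrow> (nat \<Rightarrow> 'y) \<Rightarrow> real"
  assumes "is_BC X K Y N" and "is_BC X K Y Nt"
    and "\<forall>k\<in>{1..K}. \<forall>x\<in>X. \<forall>yk\<in>Y k. BC_marginal K Y N k x yk = BC_marginal K Y Nt k x yk"
    and "\<forall>k\<in>{1..K}. finite (M k) \<and> M k \<noteq> {}"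
  shows "(\<forall>Z. is_NS_scheme X K n M Y Z \<longrightarrow>
            (\<forall>k\<in>{1..K}. Pe_NS X K n M Y N Z k = Pe_NS X K n M Y Nt Z k)) \<and>
         (\<forall>phi psi. is_classical_scheme X K n M Y phi psi \<longrightarrow>
            (\<forall>k\<in>{1..K}. Pe_classical X K n M Y N phi psi k = Pe_classical X K n M Y Nt phi psi k))"
proof (intro conjI allI impI ballI)
  have fin: "\<forall>j\<in>{1..K}. finite (Y j)" using assms(1) unfolding is_BC_def by blast
  note mrg = assms(3)
  fix Z k assume ns: "is_NS_scheme X K n M Y Z" and k: "k \<in> {1..K}"
  show "Pe_NS X K n M Y N Z k = Pe_NS X K n M Y Nt Z k"
    unfolding Pe_NS_def
  proof (rule arg_cong[where f="(*) _"], rule sum.cong[OF refl], rule sum.cong[OF refl])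
    fix w u assume w: "w \<in> PiE {1..K} M" and u: "u \<in> seqs n X"
    define G where "G yk = (\<Sum>wh\<in>{wh\<in>PiE {1..K} M. wh k \<noteq> w k}. Z u wh w (SOME ys. ys \<in> out_seqs K n Y \<and> ys k = yk))" for yk
    have Gys: "(\<Sum>wh\<in>{wh\<in>PiE {1..K} M. wh k \<noteq> w k}. Z u wh w ys) = G (ys k)" if ys: "ys \<in> out_seqs K n Y" for ys
    proof -
      let ?s = "SOME ys'. ys' \<in> out_seqs K n Y \<and> ys' k = ys k"
      have "?s \<in> out_seqs K n Y \<and> ?s k = ys k" by (rule someI[of _ ys]) (use ys in simp)
      then show ?thesis unfolding G_def using ns_inv[OF ns assms(4) k w u ys, of ?s] by simp
    qed
    have "(\<Sum>ys\<in>out_seqs K n Y. \<Sum>wh\<in>{wh\<in>PiE {1..K} M. wh k \<noteq> w k}. Z u wh w ys * BC_n K n NN u ys)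
        = (\<Sum>ys\<in>out_seqs K n Y. G (ys k) * BC_n K n NN u ys)" for NN
    proof (intro sum.cong refl)
      fix ys assume ys: "ys \<in> out_seqs K n Y"
      show "(\<Sum>wh\<in>{wh\<in>PiE {1..K} M. wh k \<noteq> w k}. Z u wh w ys * BC_n K n NN u ys) = G (ys k) * BC_n K n NN u ys"
        unfolding sum_distrib_right[symmetric] Gys[OF ys] ..
    qed
    then show "(\<Sum>ys\<in>out_seqs K n Y. \<Sum>wh\<in>{wh\<in>PiE {1..K} M. wh k \<noteq> w k}. Z u wh w ys * BC_n K n N u ys)
        = (\<Sum>ys\<in>out_seqs K n Y. \<Sum>wh\<in>{wh\<in>PiE {1..K} M. wh k \<noteq> w k}. Z u wh w ys * BC_n K n Nt u ys)"
      using marg_eq[OF fin k u mrg, of G] by simp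
  qed
next
  have fin: "\<forall>j\<in>{1..K}. finite (Y j)" using assms(1) unfolding is_BC_def by blast
  note mrg = assms(3)
  fix phi psi k assume "is_classical_scheme X K n M Y phi psi" and k: "k \<in> {1..K}"
  show "Pe_classical X K n M Y N phi psi k = Pe_classical X K n M Y Nt phi psi k"
    unfolding Pe_classical_def
  proof (rule arg_cong[where f="(*) _"], rule sum.cong[OF refl], rule sum.cong[OF refl])
    fix w u assume u: "u \<in> seqs n X"
    let ?g = "\<lambda>yk. \<Sum>m\<in>M k - {w k}. psi k yk m"
    have "(\<Sum>ys\<in>out_seqs K n Y. phi w u * BC_n K n NN u ys * ?g (ys k))
        = phi w u * (\<Sum>ys\<in>out_seqs K n Y. ?g (ys k) * BC_n K n NN u ys)" for NN
      by (simp add: sum_distrib_left mult_ac)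
    then show "(\<Sum>ys\<in>out_seqs K n Y. phi w u * BC_n K n N u ys * ?g (ys k))
        = (\<Sum>ys\<in>out_seqs K n Y. phi w u * BC_n K n Nt u ys * ?g (ys k))"
      using marg_eq[OF fin k u mrg, of ?g] by simp
  qed
qed

end
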